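(* Let $T$ be a uniformly random spanning tree of $K_n$ and let $k,\ell\in \mathbb N$ satisfy $k+\ell\le n$. Then $$\Pr\big(E(T)\cap \{v_iv_j: i\le k,\ n-\ell< j\le n\} = \emptyset\big) = \frac{(n-k)^{\ell-1}(n-\ell)^{k-1}(n-k-\ell)}{n^{k+\ell-1}}.$$
   Context: $K_n$ is the complete graph on vertex set $V_n=\{v_1,\dots,v_n\}$. *)

theory Defs
  imports "HOL-Probability.Probability"
begin

text \<open>Simple graphs on a vertex set of naturals; an edge is a 2-element set {x,y}, x \<noteq> y.
  The complete graph K_n has vertex set V_n = {1..n} (vertex v_i is the number i).\<close>

definition complete_edges :: "nat \<Rightarrow> nat set set" where
  "complete_edges n = {{i, j} | i j. i \<in> {1..n} \<and> j \<in> {1..n} \<and> i \<noteq> j}"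

definition adj_rel :: "'a set set \<Rightarrow> ('a \<times> 'a) set" where
  "adj_rel F = {(x, y). {x, y} \<in> F}"

definition graph_connected :: "'a set \<Rightarrow> 'a set set \<Rightarrow> bool" where
  "graph_connected V F \<longleftrightarrow> (\<forall>u\<in>V. \<forall>v\<in>V. (u, v) \<in> (adj_rel F)\<^sup>*)"

definition is_cycle :: "'a set set \<Rightarrow> 'a list \<Rightarrow> bool" where
  "is_cycle F vs \<longleftrightarrow> length vs \<ge> 3 \<and> distinct vs \<and>
     (\<forall>i < length vs. {vs ! i, vs ! ((i + 1) mod length vs)} \<in> F)"

definition graph_acyclic :: "'a set set \<Rightarrow> bool" where
  "graph_acyclic F \<longleftrightarrow> (\<nexists>vs. is_cycle F vs)"

definition is_tree :: "'a set \<Rightarrow> 'a set set \<Rightarrow> bool" where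
  "is_tree V F \<longleftrightarrow> V \<noteq> {} \<and> F \<subseteq> {{x, y} | x y. x \<in> V \<and> y \<in> V \<and> x \<noteq> y}
     \<and> graph_connected V F \<and> graph_acyclic F"

definition spanning_trees_K :: "nat \<Rightarrow> nat set set set" where
  "spanning_trees_K n = {F. F \<subseteq> complete_edges n \<and> is_tree {1..n} F}"

end

theory Submission
  imports Defs
begin

definition reach :: "('a \<Rightarrow> 'a) \<Rightarrow> 'a set \<Rightarrow> 'a \<Rightarrow> bool" where
  "reach p R v \<longleftrightarrow> (\<exists>i. (p ^^ i) v \<in> R)"

definition forests :: "'a set \<Rightarrow> 'a set \<Rightarrow> ('a \<Rightarrow> 'a) set" where
  "forests V R = {p \<in> PiE (V - R) (\<lambda>_. V). \<forall>v\<in>V. reach p R v}"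

definition depth :: "('a \<Rightarrow> 'a) \<Rightarrow> 'a set \<Rightarrow> 'a \<Rightarrow> nat" where
  "depth p R v = (LEAST i. (p ^^ i) v \<in> R)"

lemma reach_step: "reach p R v \<longleftrightarrow> v \<in> R \<or> reach p R (p v)"
proof
  assume "reach p R v"
  then obtain i where i: "(p ^^ i) v \<in> R" by (auto simp: reach_def)
  show "v \<in> R \<or> reach p R (p v)"
  proof (cases i)
    case 0 then show ?thesis using i by simp
  next
    case (Suc j) then show ?thesis using i unfolding reach_def
      by (metis comp_apply funpow_Suc_right)
  qed
next
  assume "v \<in> R \<or> reach p R (p v)"
  then show "reach p R v" unfolding reach_def
    by (metis comp_apply funpow_0 funpow_Suc_right)
qed

lemma reach_mono: "reach p R v \<Longrightarrow> R \<subseteq> R' \<Longrightarrow> reach p R' v"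
  unfolding reach_def by blast

lemma reach_iter: "reach p R ((p ^^ k) v) \<Longrightarrow> reach p R v"
  unfolding reach_def by (metis funpow_add comp_apply)

lemma reach_agree:
  assumes "(p ^^ i) v \<in> R" "v \<in> Z"
    and "\<And>w. w \<in> Z \<Longrightarrow> w \<notin> R \<Longrightarrow> p w = q w \<and> p w \<in> Z"
  shows "reach q R v"
  using assms(1,2)
proof (induction i arbitrary: v)
  case 0 then show ?case by (auto simp: reach_def intro: exI[of _ 0])
next
  case (Suc i)
  show ?case
  proof (cases "v \<in> R")
    case True then show ?thesis by (auto simp: reach_def intro: exI[of _ 0])
  next
    case False
    with assms(3)[OF Suc.prems(2)] have e: "p v = q v" "p v \<in> Z" by auto
    have "(p ^^ i) (p v) \<in> R" using Suc.prems(1) by (metis comp_apply funpow_Suc_right)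
    from Suc.IH[OF this e(2)] show ?thesis using e(1) reach_step by metis
  qed
qed

lemma forestsD:
  assumes "p \<in> forests V R" "v \<in> V" "v \<notin> R"
  shows "p v \<in> V"
  using assms unfolding forests_def by auto

lemma forests_out: "p \<in> forests V R \<Longrightarrow> v \<notin> V - R \<Longrightarrow> p v = undefined"
  unfolding forests_def by auto

lemma forests_reach: "p \<in> forests V R \<Longrightarrow> v \<in> V \<Longrightarrow> reach p R v"
  unfolding forests_def by auto

context
  fixes p V R
  assumes pF: "p \<in> forests V R"
begin

lemma depth_in: "v \<in> V \<Longrightarrow> (p ^^ depth p R v) v \<in> R"
  unfolding depth_def using forests_reach[OF pF] unfolding reach_def by (metis LeastI)

lemma depth_less: "i < depth p R v \<Longrightarrow> (p ^^ i) v \<notin> R"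
  unfolding depth_def using not_less_Least by blast

lemma depth_iter_in: "v \<in> V \<Longrightarrow> i \<le> depth p R v \<Longrightarrow> (p ^^ i) v \<in> V"
proof (induction i)
  case 0 then show ?case by simp
next
  case (Suc i)
  then have "(p ^^ i) v \<in> V" "(p ^^ i) v \<notin> R" using depth_less by auto
  then show ?case using forestsD[OF pF] by simp
qed

lemma depth_R: "v \<in> R \<Longrightarrow> depth p R v = 0"
  unfolding depth_def by (simp add: Least_eq_0)

lemma depth_step: assumes "v \<in> V" "v \<notin> R" shows "depth p R v = Suc (depth p R (p v))"
proof -
  have pv: "p v \<in> V" using forestsD[OF pF assms] .
  have d0: "depth p R v \<noteq> 0" using depth_in[OF assms(1)] assms(2) by (metis funpow_0)
  then obtain j where j: "depth p R v = Suc j" using not0_implies_Suc by blast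
  have "(p ^^ j) (p v) \<in> R" using depth_in[OF assms(1)] j by (metis comp_apply funpow_Suc_right)
  then have le: "depth p R (p v) \<le> j" unfolding depth_def by (rule Least_le)
  have "(p ^^ Suc (depth p R (p v))) v \<in> R" using depth_in[OF pv] by (metis comp_apply funpow_Suc_right)
  then have "depth p R v \<le> Suc (depth p R (p v))" unfolding depth_def by (rule Least_le)
  with le j show ?thesis by simp
qed

lemma depth_iter: "v \<in> V \<Longrightarrow> k \<le> depth p R v \<Longrightarrow> depth p R ((p ^^ k) v) = depth p R v - k"
proof (induction k)
  case 0 then show ?case by simp
next
  case (Suc k)
  have "(p ^^ k) v \<in> V" "(p ^^ k) v \<notin> R" using depth_iter_in depth_less Suc by auto
  then have "depth p R ((p ^^ k) v) = Suc (depth p R (p ((p ^^ k) v)))" using depth_step by blast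
  then show ?case using Suc by simp
qed

end


definition W :: "('a \<Rightarrow> real) \<Rightarrow> 'a set \<Rightarrow> 'a set \<Rightarrow> real" where
  "W x V R = (\<Sum>p\<in>forests V R. \<Prod>v\<in>V - R. x (p v))"

lemma finite_forests: "finite V \<Longrightarrow> finite (forests V R)"
  unfolding forests_def by (rule finite_subset[of _ "PiE (V - R) (\<lambda>_. V)"]) (auto intro: finite_PiE)

lemma forests_empty_R: "V \<noteq> {} \<Longrightarrow> forests V {} = {}"
  unfolding forests_def reach_def by auto

lemma forests_all: "forests V V = {\<lambda>_. undefined}"
  unfolding forests_def reach_def by (auto intro: exI[of _ 0])

definition ext_fun :: "'a set \<Rightarrow> 'a \<Rightarrow> ('a \<Rightarrow> 'a) \<Rightarrow> 'a \<Rightarrow> 'a" where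
  "ext_fun S r q = (\<lambda>v. if v \<in> S then r else q v)"

lemma forests_split:
  assumes fin: "finite V" and rR: "r \<in> R" and RV: "R \<subseteq> V"
  shows "W x V R = (\<Sum>S\<in>Pow (V - R). x r ^ card S * W x (V - {r}) (R - {r} \<union> S))"
proof -
  define U where "U = V - R"
  define T where "T = Sigma (Pow U) (\<lambda>S. forests (V - {r}) (R - {r} \<union> S))"
  have dom: "\<And>S. S \<subseteq> U \<Longrightarrow> V - {r} - (R - {r} \<union> S) = U - S" using rR unfolding U_def by auto
  define i where "i = (\<lambda>(S, q). ext_fun S r q)"
  define j where "j = (\<lambda>p. ({v\<in>U. p v = r}, restrict p (U - {v\<in>U. p v = r})))"
  have "W x V R = (\<Sum>Sq\<in>T. (\<lambda>(S, q). x r ^ card S * (\<Prod>v\<in>U - S. x (q v))) Sq)"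
    unfolding W_def
  proof (rule sum.reindex_bij_witness[of _ i j])
    fix p assume pF: "p \<in> forests V R"
    define S where "S = {v\<in>U. p v = r}"
    have jp: "j p = (S, restrict p (U - S))" unfolding j_def S_def by simp
    show "i (j p) = p"
    proof
      fix v show "i (j p) v = p v"
        using forests_out[OF pF, of v] unfolding jp i_def ext_fun_def S_def U_def by auto
    qed
    have SU: "S \<subseteq> U" unfolding S_def by auto
    have q_in: "restrict p (U - S) \<in> forests (V - {r}) (R - {r} \<union> S)"
      unfolding forests_def mem_Collect_eq
    proof (intro conjI ballI)
      show "restrict p (U - S) \<in> PiE (V - {r} - (R - {r} \<union> S)) (\<lambda>_. V - {r})"
        unfolding dom[OF SU] using forestsD[OF pF] unfolding S_def U_def by auto
      fix v assume v: "v \<in> V - {r}"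
      from forests_reach[OF pF] v obtain k where k: "(p ^^ k) v \<in> R" unfolding reach_def by auto
      have "\<forall>v\<in>V - {r}. (p ^^ k) v \<in> R \<longrightarrow> reach (restrict p (U - S)) (R - {r} \<union> S) v"
      proof (induction k)
        case 0 then show ?case by (auto simp: reach_def intro: exI[of _ 0])
      next
        case (Suc k)
        show ?case
        proof (intro ballI impI)
          fix v assume v: "v \<in> V - {r}" and kv: "(p ^^ Suc k) v \<in> R"
          show "reach (restrict p (U - S)) (R - {r} \<union> S) v"
          proof (cases "v \<in> R - {r} \<union> S")
            case True then show ?thesis by (auto simp: reach_def intro: exI[of _ 0])
          next
            case False
            then have vU: "v \<in> U - S" "p v \<noteq> r" using v unfolding U_def S_def by auto
            have pv: "p v \<in> V - {r}" using forestsD[OF pF] vU unfolding U_def by auto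
            have "(p ^^ k) (p v) \<in> R" using kv by (metis comp_apply funpow_Suc_right)
            with Suc.IH pv have "reach (restrict p (U - S)) (R - {r} \<union> S) (p v)" by blast
            then show ?thesis using vU reach_step by (metis restrict_apply')
          qed
        qed
      qed
      then show "reach (restrict p (U - S)) (R - {r} \<union> S) v" using v k by blast
    qed
    show "j p \<in> T" unfolding jp T_def using SU q_in by auto
    have "(\<Prod>v\<in>V - R. x (p v)) = (\<Prod>v\<in>S. x (p v)) * (\<Prod>v\<in>U - S. x (p v))"
      unfolding U_def[symmetric] using SU fin U_def
      by (metis (no_types, lifting) finite_Diff prod.subset_diff mult.commute)
    also have "(\<Prod>v\<in>S. x (p v)) = x r ^ card S" unfolding S_def by simp
    finally show "(\<lambda>(S, q). x r ^ card S * (\<Prod>v\<in>U - S. x (q v))) (j p) = (\<Prod>v\<in>V - R. x (p v))"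
      unfolding jp by simp
  next
    fix Sq assume "Sq \<in> T"
    then obtain S q where Sq: "Sq = (S, q)" and SU: "S \<subseteq> U" and qF: "q \<in> forests (V - {r}) (R - {r} \<union> S)"
      unfolding T_def by auto
    have qU: "\<And>v. v \<in> U - S \<Longrightarrow> q v \<in> V - {r}" using forestsD[OF qF] dom[OF SU] by auto
    have qout: "\<And>v. v \<notin> U - S \<Longrightarrow> q v = undefined" using forests_out[OF qF] dom[OF SU] by auto
    have S_eq: "{v\<in>U. ext_fun S r q v = r} = S" using SU qU unfolding ext_fun_def by auto
    show "j (i Sq) = Sq" unfolding Sq i_def j_def split S_eq
      using qout unfolding ext_fun_def by (auto simp: restrict_def)
    show "i Sq \<in> forests V R"
      unfolding forests_def mem_Collect_eq Sq i_def split
    proof (intro conjI ballI)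
      show "ext_fun S r q \<in> PiE (V - R) (\<lambda>_. V)"
        unfolding PiE_iff extensional_def mem_Collect_eq
      proof (intro conjI ballI allI impI)
        fix v assume "v \<in> V - R" then show "ext_fun S r q v \<in> V"
          using qU rR RV unfolding ext_fun_def U_def by auto
      next
        fix v assume "v \<notin> V - R" then show "ext_fun S r q v = undefined"
          using SU qout unfolding ext_fun_def U_def by auto
      qed
      fix v assume v: "v \<in> V"
      show "reach (ext_fun S r q) R v"
      proof (cases "v = r")
        case True then show ?thesis using rR by (auto simp: reach_def intro: exI[of _ 0])
      next
        case False
        with v forests_reach[OF qF] obtain k where k: "(q ^^ k) v \<in> R - {r} \<union> S"
          unfolding reach_def by auto
        have "\<forall>v\<in>V - {r}. (q ^^ k) v \<in> R - {r} \<union> S \<longrightarrow> reach (ext_fun S r q) R v"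
        proof (induction k)
          case 0 show ?case
          proof (intro ballI impI)
            fix v assume "v \<in> V - {r}" "(q ^^ 0) v \<in> R - {r} \<union> S"
            then show "reach (ext_fun S r q) R v"
              using rR reach_step[of "ext_fun S r q" R v] reach_step[of "ext_fun S r q" R r]
              unfolding ext_fun_def by auto
          qed
        next
          case (Suc k)
          show ?case
          proof (intro ballI impI)
            fix v assume v: "v \<in> V - {r}" and kv: "(q ^^ Suc k) v \<in> R - {r} \<union> S"
            show "reach (ext_fun S r q) R v"
            proof (cases "v \<in> R - {r} \<union> S")
              case True then show ?thesis
                using rR reach_step[of "ext_fun S r q" R v] reach_step[of "ext_fun S r q" R r]
                unfolding ext_fun_def by auto
            next
              case False
              then have vU: "v \<in> U - S" using v unfolding U_def by auto
              have "(q ^^ k) (q v) \<in> R - {r} \<union> S" using kv by (metis comp_apply funpow_Suc_right)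
              with Suc.IH qU[OF vU] have "reach (ext_fun S r q) R (q v)" by blast
              then show ?thesis using vU reach_step[of "ext_fun S r q" R v] unfolding ext_fun_def by auto
            qed
          qed
        qed
        then show ?thesis using v False k by blast
      qed
    qed
  qed
  also have "\<dots> = (\<Sum>S\<in>Pow U. \<Sum>q\<in>forests (V - {r}) (R - {r} \<union> S). x r ^ card S * (\<Prod>v\<in>U - S. x (q v)))"
    unfolding T_def using fin finite_forests[of "V - {r}"] unfolding U_def
    by (subst sum.Sigma) auto
  also have "\<dots> = (\<Sum>S\<in>Pow U. x r ^ card S * W x (V - {r}) (R - {r} \<union> S))"
    unfolding W_def
  proof (rule sum.cong[OF refl])
    fix S assume "S \<in> Pow U"
    then show "(\<Sum>q\<in>forests (V - {r}) (R - {r} \<union> S). x r ^ card S * (\<Prod>v\<in>U - S. x (q v))) =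
          x r ^ card S * (\<Sum>q\<in>forests (V - {r}) (R - {r} \<union> S). \<Prod>v\<in>V - {r} - (R - {r} \<union> S). x (q v))"
      using dom by (simp add: sum_distrib_left)
  qed
  finally show ?thesis unfolding U_def .
qed


lemma pow_binom:
  assumes "finite U"
  shows "(\<Sum>S\<in>Pow U. a ^ card S * b ^ card (U - S)) = ((a::real) + b) ^ card U"
  using prod_add[OF assms, of "\<lambda>_. a" "\<lambda>_. b"] by simp

lemma pow_binom2:
  assumes "finite U"
  shows "(a + b) * (\<Sum>S\<in>Pow U. a ^ card S * sum x S * b ^ card (U - S)) = a * sum x U * ((a::real) + b) ^ card U"
  using assms
proof (induction U rule: finite_induct)
  case empty then show ?case by simp
next
  case (insert u U)
  define f where "f = (\<lambda>S. a ^ card S * sum x S * b ^ card (insert u U - S))"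
  have disj: "Pow U \<inter> insert u ` Pow U = {}" using insert by auto
  have inj: "inj_on (insert u) (Pow U)" by (rule inj_onI) (metis Diff_insert_absorb PowD insert.hyps(2) subsetD)
  have "(\<Sum>S\<in>Pow (insert u U). f S) = (\<Sum>S\<in>Pow U. f S) + (\<Sum>S\<in>Pow U. f (insert u S))"
    unfolding Pow_insert using insert disj inj
    by (simp add: sum.union_disjoint sum.reindex)
  also have "(\<Sum>S\<in>Pow U. f S) = b * (\<Sum>S\<in>Pow U. a ^ card S * sum x S * b ^ card (U - S))"
  proof -
    have c: "card (insert u U - S) = Suc (card (U - S))" if S: "S \<in> Pow U" for S
    proof -
      have "insert u U - S = insert u (U - S)" using insert S by auto
      then show ?thesis using insert by simp
    qed
    have "(\<Sum>S\<in>Pow U. f S) = (\<Sum>S\<in>Pow U. b * (a ^ card S * sum x S * b ^ card (U - S)))"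
      by (rule sum.cong[OF refl]) (simp add: f_def c)
    then show ?thesis by (simp add: sum_distrib_left)
  qed
  also have "(\<Sum>S\<in>Pow U. f (insert u S)) = a * x u * (\<Sum>S\<in>Pow U. a ^ card S * b ^ card (U - S))
       + a * (\<Sum>S\<in>Pow U. a ^ card S * sum x S * b ^ card (U - S))"
  proof -
    have c: "f (insert u S) = a * x u * (a ^ card S * b ^ card (U - S)) + a * (a ^ card S * sum x S * b ^ card (U - S))"
      if S: "S \<in> Pow U" for S
    proof -
      have fS: "finite S" "u \<notin> S" using insert S finite_subset by auto
      have "insert u U - insert u S = U - S" using insert S by auto
      then show ?thesis unfolding f_def using fS by (simp add: algebra_simps)
    qed
    have "(\<Sum>S\<in>Pow U. f (insert u S)) = (\<Sum>S\<in>Pow U. a * x u * (a ^ card S * b ^ card (U - S)) + a * (a ^ card S * sum x S * b ^ card (U - S)))"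
      by (rule sum.cong[OF refl]) (rule c)
    then show ?thesis by (simp add: sum.distrib sum_distrib_left)
  qed
  finally have "(\<Sum>S\<in>Pow (insert u U). f S) = b * (\<Sum>S\<in>Pow U. a ^ card S * sum x S * b ^ card (U - S))
     + a * x u * (a + b) ^ card U + a * (\<Sum>S\<in>Pow U. a ^ card S * sum x S * b ^ card (U - S))"
    using pow_binom[OF insert(1)] by simp
  then have "(a + b) * (\<Sum>S\<in>Pow (insert u U). f S) = (a + b) * ((a + b) * (\<Sum>S\<in>Pow U. a ^ card S * sum x S * b ^ card (U - S)))
     + a * x u * (a + b) ^ Suc (card U)"
    by (simp add: algebra_simps)
  also have "\<dots> = a * sum x (insert u U) * (a + b) ^ card (insert u U)"
    using insert by (simp add: algebra_simps)
  finally show ?case unfolding f_def .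
qed

lemma alg: assumes "a>0" "s>0" shows "(c*P + a*(s-c)*P/(a+s))/s = (a+c)*P/(a+(s::real))"
proof -
  have h: "a + s \<noteq> 0" using assms by simp
  have "c*P + a*(s-c)*P/(a+s) = (c*P*(a+s) + a*(s-c)*P)/(a+s)" using h by (simp add: field_simps)
  also have "c*P*(a+s) + a*(s-c)*P = s*((a+c)*P)" by (simp add: algebra_simps)
  finally show ?thesis using assms by simp
qed

theorem W_formula:
  assumes "finite V" "V \<noteq> {}" "R \<subseteq> V" "\<forall>v\<in>V. x v > 0"
  shows "W x V R = sum x R * sum x V ^ card (V - R) / sum x V"
  using assms
proof (induction "card V" arbitrary: V R rule: less_induct)
  case less
  show ?case
  proof (cases "R = {}")
    case True
    then show ?thesis using forests_empty_R[OF less.prems(2)] by (simp add: W_def)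
  next
    case False
    then obtain r where rR: "r \<in> R" by auto
    define U where "U = V - R"
    define V' where "V' = V - {r}"
    define R' where "R' = R - {r}"
    have finU: "finite U" using less.prems(1) unfolding U_def by auto
    have rV: "r \<in> V" using rR less.prems(3) by auto
    have sigma: "sum x V = x r + sum x V'" unfolding V'_def using less.prems(1) rV
      by (simp add: sum.remove)
    show ?thesis
    proof (cases "V' = {}")
      case True
      then have "V = {r}" "R = {r}" using rV rR less.prems(3) unfolding V'_def by auto
      then show ?thesis using forests_all[of "{r}"] less.prems(4) by (simp add: W_def)
    next
      case False
      have cardV': "card V' < card V" unfolding V'_def using less.prems(1) rV by (rule card_Diff1_less)
      have posV': "sum x V' > 0" using False less.prems(1,4) unfolding V'_def
        by (intro sum_pos) auto
      define a where "a = x r"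
      define c where "c = sum x R'"
      define s' where "s' = sum x V'"
      have apos: "a > 0" using less.prems(4) rV unfolding a_def by auto
      have IH: "W x V' (R' \<union> S) = (c + sum x S) * s' ^ card (U - S) / s'" if S: "S \<subseteq> U" for S
      proof -
        have "W x V' (R' \<union> S) = sum x (R' \<union> S) * sum x V' ^ card (V' - (R' \<union> S)) / sum x V'"
        proof -
          have "R' \<union> S \<subseteq> V'" using S less.prems(3) using rR unfolding V'_def R'_def U_def by auto
          moreover have "finite V'" "\<forall>v\<in>V'. x v > 0" using less.prems(1,4) unfolding V'_def by auto
          ultimately show ?thesis using less.hyps[OF cardV'] False by blast
        qed
        moreover have "V' - (R' \<union> S) = U - S" unfolding V'_def R'_def U_def using rR by auto
        moreover have "sum x (R' \<union> S) = c + sum x S" unfolding c_def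
          using S less.prems(1,3) unfolding R'_def U_def
          by (subst sum.union_disjoint) (auto intro: finite_subset)
        ultimately show ?thesis unfolding s'_def by simp
      qed
      have "W x V R = (\<Sum>S\<in>Pow U. a ^ card S * ((c + sum x S) * s' ^ card (U - S) / s'))"
        using forests_split[OF less.prems(1) rR less.prems(3), of x] IH
        unfolding U_def[symmetric] V'_def[symmetric] R'_def[symmetric] a_def[symmetric]
        by (auto intro: sum.cong)
      also have "\<dots> = (c * (\<Sum>S\<in>Pow U. a ^ card S * s' ^ card (U - S))
          + (\<Sum>S\<in>Pow U. a ^ card S * sum x S * s' ^ card (U - S))) / s'"
        by (simp add: sum_distrib_left sum_divide_distrib sum.distrib[symmetric] algebra_simps add_divide_distrib)
      also have "\<dots> = (c * (a + s') ^ card U + a * sum x U * (a + s') ^ card U / (a + s')) / s'"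
        using pow_binom[OF finU, of a s'] pow_binom2[OF finU, of a s' x] apos posV'
        unfolding s'_def
        by (simp add: nonzero_eq_divide_eq mult.commute)
      also have "sum x U = s' - c"
      proof -
        have "V' = R' \<union> U" "R' \<inter> U = {}" unfolding V'_def R'_def U_def using less.prems(3) rR by auto
        then have "s' = c + sum x U" unfolding s'_def c_def using less.prems(1)
          unfolding V'_def by (metis finite_Diff finite_Un sum.union_disjoint)
        then show ?thesis by simp
      qed
      also have "(c * (a + s') ^ card U + a * (s' - c) * (a + s') ^ card U / (a + s')) / s'
          = (a + c) * (a + s') ^ card U / (a + s')"
        using apos posV' unfolding s'_def by (rule alg)
      also have "a + c = sum x R" unfolding a_def c_def R'_def using rR less.prems(1,3)
        by (metis finite_subset sum.remove)
      also have "a + s' = sum x V" unfolding a_def s'_def using sigma by simp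
      also have "card U = card (V - R)" unfolding U_def ..
      finally show ?thesis .
    qed
  qed
qed


lemma mod_nb1: assumes "(L::nat) \<ge> 3" "i < L" shows "(i+1) mod L \<noteq> i"
proof (cases "i + 1 < L")
  case True then show ?thesis by simp
next
  case False then have "i + 1 = L" using assms by simp
  then show ?thesis using assms by simp
qed

lemma mod_nb0': assumes "(L::nat) \<ge> 3" "i < L" "i \<noteq> 0" shows "(i + L - 1) mod L = i - 1"
proof -
  have "i + L - 1 = (i - 1) + L" using assms by simp
  then show ?thesis using assms by (simp only: mod_add_self2) simp
qed

lemma mod_nb0: assumes "(L::nat) \<ge> 3" "i < L" shows "(i + L - 1) mod L \<noteq> i"
proof (cases "i = 0")
  case True
  then have "(i + L - 1) mod L = L - 1" using assms by simp
  then show ?thesis using True assms by simp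
next
  case False then show ?thesis using mod_nb0'[OF assms False] by simp
qed

lemma mod_nb: assumes "(L::nat) \<ge> 3" "i < L" shows "(i + L - 1) mod L \<noteq> (i+1) mod L"
proof (cases "i = 0")
  case True
  then have "(i + L - 1) mod L = L - 1" "(i + 1) mod L = 1" using assms by simp_all
  then show ?thesis using assms by simp
next
  case False
  note e = mod_nb0'[OF assms False]
  show ?thesis
  proof (cases "i + 1 < L")
    case True then show ?thesis using e by simp
  next
    case F2: False then have "i + 1 = L" using assms by simp
    then show ?thesis using e assms by simp
  qed
qed

definition pedges :: "'a set \<Rightarrow> ('a \<Rightarrow> 'a) \<Rightarrow> 'a set set" where
  "pedges U p = (\<lambda>v. {v, p v}) ` U"

lemma no_fix: "p \<in> forests V R \<Longrightarrow> v \<in> V \<Longrightarrow> v \<notin> R \<Longrightarrow> p v \<noteq> v"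
  using depth_step[of p V R v] by auto

lemma adj_sym: "sym (adj_rel F)"
  unfolding adj_rel_def sym_def by (auto simp: insert_commute)

lemma tree_edge:
  assumes "is_tree V T" "e \<in> T"
  shows "\<exists>x y. e = {x, y} \<and> x \<in> V \<and> y \<in> V \<and> x \<noteq> y"
  using assms unfolding is_tree_def by auto

context
  fixes p V c
  assumes pF: "p \<in> forests V {c}" and finV: "finite V" and cV: "c \<in> V"
begin


lemma pe_V: assumes "e \<in> pedges (V - {c}) p" shows "e \<subseteq> V"
proof -
  obtain v where v: "v \<in> V - {c}" "e = {v, p v}" using assms unfolding pedges_def by blast
  have "p v \<in> V" using forestsD[OF pF, of v] v by blast
  then show ?thesis using v by blast
qed

lemma pe_key:
  assumes "{x, y} \<in> pedges (V - {c}) p" "x \<noteq> y" "depth p {c} y \<le> depth p {c} x"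
  shows "x \<in> V - {c} \<and> y = p x"
proof -
  obtain w where w: "w \<in> V - {c}" "{x, y} = {w, p w}" using assms(1) unfolding pedges_def by auto
  show ?thesis
  proof (cases "w = x")
    case True then show ?thesis using w assms(2) by (auto simp: doubleton_eq_iff)
  next
    case False
    then have "x = p w" "y = w" using w assms(2) by (auto simp: doubleton_eq_iff)
    then have "depth p {c} y = Suc (depth p {c} x)" using depth_step[OF pF, of w] w by auto
    then show ?thesis using assms(3) by simp
  qed
qed

lemma ptree: "is_tree V (pedges (V - {c}) p)"
  unfolding is_tree_def
proof (intro conjI)
  show "V \<noteq> {}" using cV by auto
  show "pedges (V - {c}) p \<subseteq> {{x, y} |x y. x \<in> V \<and> y \<in> V \<and> x \<noteq> y}"
    unfolding pedges_def using forestsD[OF pF] no_fix[OF pF] by fastforce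
  have toc: "(u, c) \<in> (adj_rel (pedges (V - {c}) p))\<^sup>*" if u: "u \<in> V" for u
  proof -
    from forests_reach[OF pF u] obtain i where "(p ^^ i) u \<in> {c}" unfolding reach_def by auto
    then have "(p ^^ i) u = c" by simp
    then show ?thesis using u
    proof (induction i arbitrary: u)
      case 0 then show ?case by simp
    next
      case (Suc i)
      show ?case
      proof (cases "u = c")
        case True then show ?thesis by simp
      next
        case False
        then have pu: "p u \<in> V" using forestsD[OF pF] Suc.prems by auto
        have "(p ^^ i) (p u) = c" using Suc.prems by (metis comp_apply funpow_Suc_right)
        then have "(p u, c) \<in> (adj_rel (pedges (V - {c}) p))\<^sup>*" using Suc.IH pu by blast
        moreover have "(u, p u) \<in> adj_rel (pedges (V - {c}) p)"
          unfolding adj_rel_def pedges_def using Suc.prems False by auto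
        ultimately show ?thesis by (meson converse_rtrancl_into_rtrancl)
      qed
    qed
  qed
  show "graph_connected V (pedges (V - {c}) p)"
    unfolding graph_connected_def
  proof (intro ballI)
    fix u v assume "u \<in> V" "v \<in> V"
    then have "(u, c) \<in> (adj_rel (pedges (V - {c}) p))\<^sup>*" "(v, c) \<in> (adj_rel (pedges (V - {c}) p))\<^sup>*"
      using toc by auto
    then show "(u, v) \<in> (adj_rel (pedges (V - {c}) p))\<^sup>*"
      using sym_rtrancl[OF adj_sym] unfolding sym_def by (meson rtrancl_trans)
  qed
  show "graph_acyclic (pedges (V - {c}) p)"
    unfolding graph_acyclic_def
  proof
    assume "\<exists>vs. is_cycle (pedges (V - {c}) p) vs"
    then obtain vs where cyc: "is_cycle (pedges (V - {c}) p) vs" by blast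
    define L where "L = length vs"
    have L3: "L \<ge> 3" and dist: "distinct vs"
      and adj: "\<And>i. i < L \<Longrightarrow> {vs ! i, vs ! ((i + 1) mod L)} \<in> pedges (V - {c}) p"
      using cyc unfolding is_cycle_def L_def by auto
    have ne: "set vs \<noteq> {}" using L3 unfolding L_def by auto
    define M where "M = Max ((depth p {c}) ` set vs)"
    have "M \<in> (depth p {c}) ` set vs" unfolding M_def using ne by auto
    then obtain i where i: "i < L" "depth p {c} (vs ! i) = M" unfolding L_def by (auto simp: in_set_conv_nth)
    have maxd: "\<And>j. j < L \<Longrightarrow> depth p {c} (vs ! j) \<le> M" unfolding M_def L_def by auto
    define j1 where "j1 = (i + 1) mod L"
    define j0 where "j0 = (i + L - 1) mod L"
    have j1L: "j1 < L" and j0L: "j0 < L" unfolding j1_def j0_def using L3 by auto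
    have j0s: "(j0 + 1) mod L = i"
    proof -
      have "(j0 + 1) mod L = (i + L - 1 + 1) mod L" unfolding j0_def by (simp add: mod_Suc_eq)
      also have "i + L - 1 + 1 = i + L" using L3 by simp
      finally show ?thesis using i by simp
    qed
    have ne1: "vs ! i \<noteq> vs ! j1" using dist i j1L mod_nb1[OF L3 i(1)] unfolding j1_def L_def
      by (simp add: nth_eq_iff_index_eq)
    have ne0: "vs ! i \<noteq> vs ! j0" using dist i j0L mod_nb0[OF L3 i(1)] unfolding j0_def L_def
      by (simp add: nth_eq_iff_index_eq)
    have "vs ! j1 = p (vs ! i)"
      using pe_key[OF adj[OF i(1)]] ne1 maxd[OF j1L] i unfolding j1_def by auto
    moreover have "vs ! j0 = p (vs ! i)"
    proof -
      have "{vs ! i, vs ! j0} \<in> pedges (V - {c}) p" using adj[OF j0L] j0s by (simp add: insert_commute)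
      then show ?thesis using pe_key ne0 maxd[OF j0L] i by auto
    qed
    ultimately have "vs ! j1 = vs ! j0" by simp
    then have "j1 = j0" using dist j1L j0L unfolding L_def by (simp add: nth_eq_iff_index_eq)
    then show False using mod_nb[OF L3 i(1)] unfolding j1_def j0_def by simp
  qed
qed

end


lemma two_cycle: "q w = u \<Longrightarrow> q u = w \<Longrightarrow> (q ^^ i) u \<in> {u, w}"
proof (induction i)
  case 0 then show ?case by simp
next
  case (Suc i)
  then show ?case by auto
qed

lemma pedges_inj:
  assumes pF: "p \<in> forests V {c}" and qF: "q \<in> forests V {c}"
    and eq: "pedges (V - {c}) p = pedges (V - {c}) q"
  shows "p = q"
proof (rule ccontr)
  assume "p \<noteq> q"
  then obtain w where pw: "p w \<noteq> q w" by auto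
  have wU: "w \<in> V - {c}"
  proof (rule ccontr)
    assume "w \<notin> V - {c}"
    then have "p w = undefined" "q w = undefined" using forests_out[OF pF] forests_out[OF qF] by blast+
    then show False using pw by simp
  qed
  have F: "q v \<in> V - {c} \<and> p (q v) = v" if v: "v \<in> V - {c}" "q v \<noteq> p v" for v
  proof -
    have "{v, q v} \<in> pedges (V - {c}) p" using eq v unfolding pedges_def by auto
    then obtain u where u: "u \<in> V - {c}" "{v, q v} = {u, p u}" unfolding pedges_def by auto
    have nq: "q v \<noteq> v" using no_fix[OF qF, of v] v by auto
    have np: "p u \<noteq> u" using no_fix[OF pF, of u] u by auto
    show ?thesis
    proof (cases "u = v")
      case True then show ?thesis using u v nq by (auto simp: doubleton_eq_iff)
    next
      case False
      then have "v = p u" "q v = u" using u(2) nq np by (auto simp: doubleton_eq_iff)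
      then show ?thesis using u by auto
    qed
  qed
  have "\<forall>v\<in>V - {c}. q v \<noteq> p v \<longrightarrow> (q ^^ i) v \<noteq> c" for i
  proof (induction i)
    case 0 then show ?case by auto
  next
    case (Suc i)
    show ?case
    proof (intro ballI impI)
      fix v assume v: "v \<in> V - {c}" "q v \<noteq> p v"
      define u where "u = q v"
      have u: "u \<in> V - {c}" "p u = v" using F[OF v] unfolding u_def by auto
      have eqs: "(q ^^ Suc i) v = (q ^^ i) u" unfolding u_def by (metis comp_apply funpow_Suc_right)
      show "(q ^^ Suc i) v \<noteq> c"
      proof (cases "q u = p u")
        case False then show ?thesis using Suc.IH u eqs by auto
      next
        case True
        then have "(q ^^ i) u \<in> {u, v}" using two_cycle[of q v u i] u unfolding u_def by auto
        then show ?thesis using eqs u v by auto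
      qed
    qed
  qed
  then have "\<forall>i. (q ^^ i) w \<noteq> c" using wU pw by auto
  moreover have "reach q {c} w" using forests_reach[OF qF] wU by auto
  ultimately show False unfolding reach_def by auto
qed


lemma cycle_lemma:
  assumes pF: "p \<in> forests V {c}" and sub: "pedges (V - {c}) p \<subseteq> T"
    and ab: "{a, b} \<in> T" and aV: "a \<in> V" and bV: "b \<in> V" and ne: "a \<noteq> b"
    and notp: "{a, b} \<notin> pedges (V - {c}) p"
  shows "\<exists>vs. is_cycle T vs"
proof -
  define da where "da = depth p {c} a"
  define db where "db = depth p {c} b"
  define A where "A = (\<lambda>k. (p ^^ k) a)"
  define B where "B = (\<lambda>k. (p ^^ k) b)"
  have Ac: "A da = c" using depth_in[OF pF aV] unfolding A_def da_def by simp
  have Bc: "B db = c" using depth_in[OF pF bV] unfolding B_def db_def by simp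
  have AU: "\<And>k. k < da \<Longrightarrow> A k \<in> V - {c}"
    using depth_iter_in[OF pF aV] depth_less[OF pF] unfolding A_def da_def by force
  have BU: "\<And>k. k < db \<Longrightarrow> B k \<in> V - {c}"
    using depth_iter_in[OF pF bV] depth_less[OF pF] unfolding B_def db_def by force
  have Ad: "\<And>k. k \<le> da \<Longrightarrow> depth p {c} (A k) = da - k"
    using depth_iter[OF pF aV] unfolding A_def da_def by blast
  have Bd: "\<And>k. k \<le> db \<Longrightarrow> depth p {c} (B k) = db - k"
    using depth_iter[OF pF bV] unfolding B_def db_def by blast
  have Astep: "\<And>k. A (Suc k) = p (A k)" unfolding A_def by simp
  have Bstep: "\<And>k. B (Suc k) = p (B k)" unfolding B_def by simp
  have Ainj: "\<And>k1 k2. k1 \<le> da \<Longrightarrow> k2 \<le> da \<Longrightarrow> A k1 = A k2 \<Longrightarrow> k1 = k2"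
    using Ad by (metis diff_diff_cancel)
  have Binj: "\<And>k1 k2. k1 \<le> db \<Longrightarrow> k2 \<le> db \<Longrightarrow> B k1 = B k2 \<Longrightarrow> k1 = k2"
    using Bd by (metis diff_diff_cancel)
  define P where "P = (\<lambda>i. \<exists>j\<le>db. A i = B j)"
  have Pda: "P da" unfolding P_def using Ac Bc by auto
  define i0 where "i0 = (LEAST i. P i)"
  have Pi0: "P i0" unfolding i0_def using Pda by (rule LeastI)
  have i0da: "i0 \<le> da" unfolding i0_def using Pda by (rule Least_le)
  obtain j0 where j0: "j0 \<le> db" "A i0 = B j0" using Pi0 unfolding P_def by auto
  have minim: "\<And>i j. i < i0 \<Longrightarrow> j \<le> db \<Longrightarrow> A i \<noteq> B j"
  proof -
    fix i j assume "i < i0" "j \<le> db"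
    then have "\<not> P i" unfolding i0_def using not_less_Least[of i P] by simp
    then show "A i \<noteq> B j" using \<open>j \<le> db\<close> unfolding P_def by blast
  qed
  define L where "L = i0 + j0 + 1"
  define f where "f = (\<lambda>k. if k \<le> i0 then A k else B (i0 + j0 - k))"
  have fA: "\<And>k. k \<le> i0 \<Longrightarrow> f k = A k" unfolding f_def by simp
  have fB: "\<And>k. i0 \<le> k \<Longrightarrow> f k = B (i0 + j0 - k)" unfolding f_def using j0 by auto
  have a0: "A 0 = a" "B 0 = b" unfolding A_def B_def by auto
  have nP1: "b \<noteq> p a" if "a \<in> V - {c}"
    using notp that unfolding pedges_def by auto
  have nP2: "a \<noteq> p b" if "b \<in> V - {c}"
    using notp that unfolding pedges_def by (auto simp: insert_commute)
  have L3: "L \<ge> 3"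
  proof (rule ccontr)
    assume "\<not> L \<ge> 3"
    then have "i0 + j0 \<le> 1" unfolding L_def by simp
    then consider "i0 = 0" "j0 = 0" | "i0 = 1" "j0 = 0" | "i0 = 0" "j0 = 1" by linarith
    then show False
    proof cases
      case 1 then show False using j0 a0 ne by simp
    next
      case 2
      then have "A 1 = b" using j0 a0 by simp
      moreover have "a \<in> V - {c}" using AU[of 0] i0da 2 a0 by simp
      ultimately show False using nP1 Astep[of 0] a0 by simp
    next
      case 3
      then have "B 1 = a" using j0 a0 by simp
      moreover have "b \<in> V - {c}" using BU[of 0] j0 3 a0 by simp
      ultimately show False using nP2 Bstep[of 0] a0 by simp
    qed
  qed
  define vs where "vs = map f [0..<L]"
  have len: "length vs = L" unfolding vs_def by simp
  have nth: "\<And>k. k < L \<Longrightarrow> vs ! k = f k" unfolding vs_def by simp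
  have inj: "inj_on f {0..<L}"
  proof (rule inj_onI)
    fix k1 k2 assume k1: "k1 \<in> {0..<L}" and k2: "k2 \<in> {0..<L}" and eq: "f k1 = f k2"
    have cross: False if "k < i0" "i0 < k'" "k' < L" "f k = f k'" for k k'
    proof -
      have "A k = B (i0 + j0 - k')" using that fA fB by simp
      moreover have "i0 + j0 - k' \<le> db" using j0(1) that(2) by simp
      ultimately show False using minim that(1) by blast
    qed
    show "k1 = k2"
    proof (cases "k1 \<le> i0 \<and> k2 \<le> i0")
      case True then show ?thesis using eq fA Ainj i0da by (metis le_trans)
    next
      case False
      show ?thesis
      proof (cases "i0 \<le> k1 \<and> i0 \<le> k2")
        case True
        then have "B (i0 + j0 - k1) = B (i0 + j0 - k2)" using eq fB by simp
        moreover have "i0 + j0 - k1 \<le> db" "i0 + j0 - k2 \<le> db" using True j0(1) by auto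
        ultimately have "i0 + j0 - k1 = i0 + j0 - k2" using Binj by blast
        then show ?thesis using True k1 k2 unfolding L_def by simp
      next
        case F2: False
        then have "(k1 < i0 \<and> i0 < k2) \<or> (k2 < i0 \<and> i0 < k1)" using False by auto
        then show ?thesis
        proof
          assume "k1 < i0 \<and> i0 < k2" then show ?thesis using cross[of k1 k2] k2 eq by auto
        next
          assume "k2 < i0 \<and> i0 < k1" then show ?thesis using cross[of k2 k1] k1 eq by auto
        qed
      qed
    qed
  qed
  have adj: "{vs ! k, vs ! ((k + 1) mod L)} \<in> T" if k: "k < L" for k
  proof (cases "k + 1 < L")
    case True
    then have m: "(k + 1) mod L = k + 1" by simp
    show ?thesis
    proof (cases "k < i0")
      case True
      then have "A k \<in> V - {c}" using AU i0da by simp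
      then have "{A k, p (A k)} \<in> T" using sub unfolding pedges_def by auto
      then show ?thesis unfolding m using nth k \<open>k + 1 < L\<close> fA True Astep by simp
    next
      case False
      define m' where "m' = i0 + j0 - k"
      have m1: "m' \<ge> 1" "m' \<le> j0" using \<open>k + 1 < L\<close> False unfolding m'_def L_def by auto
      have "B (m' - 1) \<in> V - {c}" using BU m1 j0 by simp
      then have "{B (m' - 1), p (B (m' - 1))} \<in> T" using sub unfolding pedges_def by auto
      moreover have "p (B (m' - 1)) = B m'" using Bstep[of "m' - 1"] m1 by simp
      moreover have "vs ! k = B m'" using nth k fB False unfolding m'_def by simp
      moreover have "vs ! (k + 1) = B (m' - 1)" using nth \<open>k + 1 < L\<close> fB False unfolding m'_def
        by (simp add: Suc_diff_Suc)
      ultimately show ?thesis unfolding m by (simp add: insert_commute)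
    qed
  next
    case False
    then have kk: "k = i0 + j0" using k unfolding L_def by simp
    then have "(k + 1) mod L = 0" unfolding L_def by simp
    moreover have "vs ! 0 = a" using nth[of 0] fA a0 unfolding L_def by simp
    moreover have "vs ! k = b" using nth k fB kk a0 by simp
    ultimately show ?thesis using ab by (simp add: insert_commute)
  qed
  have "is_cycle T vs"
    unfolding is_cycle_def len
  proof (intro conjI allI impI)
    show "3 \<le> L" using L3 .
    show "distinct vs" unfolding vs_def using inj by (simp add: distinct_map)
    fix i assume "i < L" then show "{vs ! i, vs ! ((i + 1) mod L)} \<in> T" by (rule adj)
  qed
  then show ?thesis by blast
qed


lemma tree_surj:
  assumes cV: "c \<in> V" and T: "is_tree V T"
  shows "\<exists>p\<in>forests V {c}. pedges (V - {c}) p = T"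
proof -
  define adj where "adj = adj_rel T"
  have conn: "\<And>v. v \<in> V \<Longrightarrow> (v, c) \<in> adj\<^sup>*"
    using T cV unfolding is_tree_def graph_connected_def adj_def by blast
  define dist where "dist = (\<lambda>v. LEAST k. (v, c) \<in> adj ^^ k)"
  have dist_in: "(v, c) \<in> adj ^^ dist v" if vV: "v \<in> V" for v
  proof -
    obtain k where "(v, c) \<in> adj ^^ k" using conn[OF vV] rtrancl_power by blast
    then show ?thesis unfolding dist_def by (rule LeastI)
  qed
  have nxt_ex: "\<exists>u. (v, u) \<in> adj \<and> dist u < dist v" if v: "v \<in> V - {c}" for v
  proof -
    have vc: "(v, c) \<in> adj ^^ dist v" using dist_in v by auto
    have "dist v \<noteq> 0"
    proof
      assume "dist v = 0"
      then have "v = c" using vc by simp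
      then show False using v by simp
    qed
    then obtain k where k: "dist v = Suc k" using not0_implies_Suc by blast
    from relpow_Suc_D2[OF vc[unfolded k]] obtain u where u: "(v, u) \<in> adj" "(u, c) \<in> adj ^^ k" by blast
    have "dist u \<le> k" unfolding dist_def using u(2) by (rule Least_le)
    then show ?thesis using u k by auto
  qed
  define p where "p = restrict (\<lambda>v. SOME u. (v, u) \<in> adj \<and> dist u < dist v) (V - {c})"
  have pprop: "(v, p v) \<in> adj \<and> dist (p v) < dist v" if v: "v \<in> V - {c}" for v
    unfolding p_def using v someI_ex[OF nxt_ex[OF v]] by simp
  have pT: "{v, p v} \<in> T" if v: "v \<in> V - {c}" for v
    using pprop[OF v] unfolding adj_def adj_rel_def by simp
  have pV: "p v \<in> V" if v: "v \<in> V - {c}" for v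
  proof -
    obtain x y where xy: "{v, p v} = {x, y}" "x \<in> V" "y \<in> V" using tree_edge[OF T pT[OF v]] by blast
    have "p v \<in> {x, y}" using xy(1) by (metis insertCI)
    then show ?thesis using xy(2,3) by blast
  qed
  have pF: "p \<in> forests V {c}"
    unfolding forests_def mem_Collect_eq
  proof (intro conjI ballI)
    have "p \<in> extensional (V - {c})" unfolding p_def by simp
    then show "p \<in> PiE (V - {c}) (\<lambda>_. V)" using pV by (simp add: PiE_iff)
    fix v assume "v \<in> V"
    then show "reach p {c} v"
    proof (induction "dist v" arbitrary: v rule: less_induct)
      case less
      show ?case
      proof (cases "v = c")
        case True then show ?thesis using reach_step[of p "{c}" v] by simp
      next
        case False
        then have v: "v \<in> V - {c}" using less.prems by simp
        have "reach p {c} (p v)" using less.hyps[OF conjunct2[OF pprop[OF v]] pV[OF v]] .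
        then show ?thesis using reach_step[of p "{c}" v] by simp
      qed
    qed
  qed
  have sub: "pedges (V - {c}) p \<subseteq> T" unfolding pedges_def by (rule image_subsetI) (rule pT)
  have "T \<subseteq> pedges (V - {c}) p"
  proof
    fix e assume e: "e \<in> T"
    obtain x y where xy: "e = {x, y}" "x \<in> V" "y \<in> V" "x \<noteq> y" using tree_edge[OF T e] by blast
    show "e \<in> pedges (V - {c}) p"
    proof (rule ccontr)
      assume "e \<notin> pedges (V - {c}) p"
      then have n: "{x, y} \<notin> pedges (V - {c}) p" using xy(1) by simp
      have t: "{x, y} \<in> T" using e xy(1) by simp
      have "\<exists>vs. is_cycle T vs" using cycle_lemma[OF pF sub t xy(2) xy(3) xy(4) n] .
      then show False using T unfolding is_tree_def graph_acyclic_def by blast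
    qed
  qed
  with sub pF show ?thesis by blast
qed

lemma tree_bij:
  assumes finV: "finite V" and cV: "c \<in> V"
  shows "bij_betw (pedges (V - {c})) (forests V {c}) {T. is_tree V T}"
  unfolding bij_betw_def
proof
  show "inj_on (pedges (V - {c})) (forests V {c})"
  proof (rule inj_onI)
    fix p q assume "p \<in> forests V {c}" "q \<in> forests V {c}" "pedges (V - {c}) p = pedges (V - {c}) q"
    then show "p = q" by (rule pedges_inj)
  qed
  show "pedges (V - {c}) ` forests V {c} = {T. is_tree V T}"
  proof
    show "pedges (V - {c}) ` forests V {c} \<subseteq> {T. is_tree V T}"
    proof (rule image_subsetI)
      fix p assume "p \<in> forests V {c}"
      then show "pedges (V - {c}) p \<in> {T. is_tree V T}" using ptree[OF _ finV cV] by simp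
    qed
    show "{T. is_tree V T} \<subseteq> pedges (V - {c}) ` forests V {c}"
    proof
      fix T assume "T \<in> {T. is_tree V T}"
      then obtain p where "p \<in> forests V {c}" "pedges (V - {c}) p = T" using tree_surj[OF cV] by blast
      then show "T \<in> pedges (V - {c}) ` forests V {c}" by blast
    qed
  qed
qed


definition rho :: "('a \<Rightarrow> 'a) \<Rightarrow> 'a set \<Rightarrow> 'a \<Rightarrow> 'a" where
  "rho g Y v = (g ^^ depth g Y v) v"

definition merge :: "'a set \<Rightarrow> ('a \<Rightarrow> 'a) \<Rightarrow> ('a \<Rightarrow> 'a) \<Rightarrow> 'a \<Rightarrow> 'a" where
  "merge X g h = (\<lambda>v. if v \<in> X then g v else h v)"

context
  fixes V Y R g
  assumes finV: "finite V" and YV: "Y \<subseteq> V" and RY: "R \<subseteq> Y" and gF: "g \<in> forests V Y"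
begin

lemma rho_in: "v \<in> V \<Longrightarrow> rho g Y v \<in> Y"
  unfolding rho_def using depth_in[OF gF] .

lemma rho_Y: "y \<in> Y \<Longrightarrow> rho g Y y = y"
  unfolding rho_def using depth_R[OF gF] by simp

lemma g_path: "v \<in> V \<Longrightarrow> i < depth g Y v \<Longrightarrow> (g ^^ i) v \<in> V - Y"
  using depth_iter_in[OF gF] depth_less[OF gF] by auto

lemma agree_path:
  assumes v: "v \<in> V" and pg: "\<And>w. w \<in> V - Y \<Longrightarrow> p w = g w"
  shows "i \<le> depth g Y v \<Longrightarrow> (p ^^ i) v = (g ^^ i) v"
proof (induction i)
  case 0 then show ?case by simp
next
  case (Suc i)
  then have "(g ^^ i) v \<in> V - Y" using g_path[OF v] by simp
  then show ?case using Suc pg by simp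
qed

lemma agree_rho:
  assumes v: "v \<in> V" and pg: "\<And>w. w \<in> V - Y \<Longrightarrow> p w = g w"
  shows "(p ^^ depth g Y v) v = rho g Y v"
  using agree_path[OF v pg] unfolding rho_def by simp

definition Hset :: "('a \<Rightarrow> 'a) set" where
  "Hset = {h \<in> PiE (Y - R) (\<lambda>_. V). restrict (rho g Y \<circ> h) (Y - R) \<in> forests Y R}"

lemma comp_bij:
  "bij_betw (\<lambda>p. restrict p (Y - R)) {p \<in> forests V R. restrict p (V - Y) = g} Hset"
proof (rule bij_betw_byWitness[where f' = "merge (V - Y) g"])
  have gX: "\<And>w. w \<in> V - Y \<Longrightarrow> g w \<in> V" using forestsD[OF gF] by auto
  have gout: "\<And>w. w \<notin> V - Y \<Longrightarrow> g w = undefined" using forests_out[OF gF] by auto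
  show "\<forall>p\<in>{p \<in> forests V R. restrict p (V - Y) = g}. merge (V - Y) g (restrict p (Y - R)) = p"
  proof (intro ballI ext)
    fix p v assume p: "p \<in> {p \<in> forests V R. restrict p (V - Y) = g}"
    then have pF: "p \<in> forests V R" and pr: "restrict p (V - Y) = g" by auto
    show "merge (V - Y) g (restrict p (Y - R)) v = p v"
    proof (cases "v \<in> V - Y")
      case True then show ?thesis unfolding merge_def using pr by auto
    next
      case False
      show ?thesis
      proof (cases "v \<in> Y - R")
        case True then show ?thesis using False unfolding merge_def by simp
      next
        case F2: False
        then have "v \<notin> V - R" using False by auto
        then have "p v = undefined" using forests_out[OF pF] by simp
        then show ?thesis using False F2 unfolding merge_def by auto
      qed
    qed
  qed
  show "\<forall>h\<in>Hset. restrict (merge (V - Y) g h) (Y - R) = h"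
  proof (intro ballI ext)
    fix h v assume h: "h \<in> Hset"
    then have "h \<in> extensional (Y - R)" unfolding Hset_def by (auto simp: PiE_iff)
    then show "restrict (merge (V - Y) g h) (Y - R) v = h v"
      unfolding merge_def restrict_def extensional_def by auto
  qed
  show "(\<lambda>p. restrict p (Y - R)) ` {p \<in> forests V R. restrict p (V - Y) = g} \<subseteq> Hset"
  proof (rule image_subsetI)
    fix p assume p: "p \<in> {p \<in> forests V R. restrict p (V - Y) = g}"
    then have pF: "p \<in> forests V R" and pr: "restrict p (V - Y) = g" by auto
    have pg: "\<And>w. w \<in> V - Y \<Longrightarrow> p w = g w" using pr by auto
    define e where "e = restrict (rho g Y \<circ> restrict p (Y - R)) (Y - R)"
    have hP: "restrict p (Y - R) \<in> PiE (Y - R) (\<lambda>_. V)"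
      using forestsD[OF pF] RY YV by auto
    have eP: "e \<in> PiE (Y - R) (\<lambda>_. Y)"
      unfolding e_def using rho_in forestsD[OF pF] RY YV by auto
    have reach_e: "reach e R y" if y: "y \<in> Y" for y
      using y
    proof (induction "depth p R y" arbitrary: y rule: less_induct)
      case less
      show ?case
      proof (cases "y \<in> R")
        case True then show ?thesis unfolding reach_def by (auto intro: exI[of _ 0])
      next
        case False
        have yV: "y \<in> V" using less.prems YV by auto
        define v where "v = p y"
        have vV: "v \<in> V" unfolding v_def using forestsD[OF pF yV False] .
        have dy: "depth p R y = Suc (depth p R v)" unfolding v_def using depth_step[OF pF yV False] .
        define j where "j = depth g Y v"
        have pj: "(p ^^ j) v = rho g Y v" unfolding j_def using agree_rho[OF vV pg] .
        have jle: "j \<le> depth p R v"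
        proof (rule ccontr)
          assume "\<not> j \<le> depth p R v"
          then have lt: "depth p R v < j" by simp
          have "(p ^^ depth p R v) v \<in> R" using depth_in[OF pF vV] .
          moreover have "(p ^^ depth p R v) v = (g ^^ depth p R v) v"
            using agree_path[OF vV pg] lt unfolding j_def by simp
          moreover have "(g ^^ depth p R v) v \<in> V - Y" using g_path[OF vV] lt unfolding j_def by simp
          ultimately show False using RY by auto
        qed
        have "depth p R (rho g Y v) = depth p R v - j"
          using depth_iter[OF pF vV jle] pj by simp
        then have lt: "depth p R (rho g Y v) < depth p R y" using dy by simp
        have rY: "rho g Y v \<in> Y" using rho_in[OF vV] .
        have "reach e R (rho g Y v)" using less.hyps[OF lt rY] .
        moreover have "e y = rho g Y v" unfolding e_def v_def using less.prems False by simp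
        ultimately show ?thesis using reach_step[of e R y] by simp
      qed
    qed
    have "e \<in> forests Y R" unfolding forests_def using eP reach_e by auto
    then show "restrict p (Y - R) \<in> Hset" unfolding Hset_def e_def using hP by simp
  qed
  show "merge (V - Y) g ` Hset \<subseteq> {p \<in> forests V R. restrict p (V - Y) = g}"
  proof (rule image_subsetI)
    fix h assume h: "h \<in> Hset"
    then have hP: "h \<in> PiE (Y - R) (\<lambda>_. V)" and eF: "restrict (rho g Y \<circ> h) (Y - R) \<in> forests Y R"
      unfolding Hset_def by auto
    define p where "p = merge (V - Y) g h"
    define e where "e = restrict (rho g Y \<circ> h) (Y - R)"
    have pg: "\<And>w. w \<in> V - Y \<Longrightarrow> p w = g w" unfolding p_def merge_def by simp
    have pP: "p \<in> PiE (V - R) (\<lambda>_. V)"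
      unfolding PiE_iff extensional_def mem_Collect_eq
    proof (intro conjI ballI allI impI)
      fix v assume "v \<in> V - R"
      then show "p v \<in> V" unfolding p_def merge_def using gX hP YV by (cases "v \<in> V - Y") auto
    next
      fix v assume v: "v \<notin> V - R"
      then have "v \<notin> V - Y" "v \<notin> Y - R" using RY YV by auto
      then show "p v = undefined" unfolding p_def merge_def using hP by (auto simp: PiE_iff extensional_def)
    qed
    have lift: "reach p R v" if v: "v \<in> V" and r: "reach p R (rho g Y v)" for v
      using r agree_rho[OF v pg] reach_iter by metis
    have reachY: "reach p R y" if y: "y \<in> Y" for y
    proof -
      obtain i where i: "(e ^^ i) y \<in> R" using forests_reach[OF eF[folded e_def] y] unfolding reach_def by auto
      show ?thesis using i y
      proof (induction i arbitrary: y)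
        case 0 then show ?case unfolding reach_def by (auto intro: exI[of _ 0])
      next
        case (Suc i)
        show ?case
        proof (cases "y \<in> R")
          case True then show ?thesis unfolding reach_def by (auto intro: exI[of _ 0])
        next
          case False
          have hy: "h y \<in> V" using hP Suc.prems False by auto
          have ey: "e y = rho g Y (h y)" unfolding e_def using Suc.prems False by simp
          have "(e ^^ i) (e y) \<in> R" using Suc.prems by (metis comp_apply funpow_Suc_right)
          then have "reach p R (e y)" using Suc.IH rho_in[OF hy] ey by simp
          then have "reach p R (h y)" using lift[OF hy] ey by simp
          moreover have "p y = h y" unfolding p_def merge_def using Suc.prems by simp
          ultimately show ?thesis using reach_step[of p R y] by simp
        qed
      qed
    qed
    have "\<forall>v\<in>V. reach p R v"
    proof
      fix v assume v: "v \<in> V"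
      show "reach p R v" using lift[OF v reachY[OF rho_in[OF v]]] .
    qed
    then have "p \<in> forests V R" unfolding forests_def using pP by simp
    moreover have "restrict p (V - Y) = g"
    proof
      fix v show "restrict p (V - Y) v = g v" using pg gout by (cases "v \<in> V - Y") auto
    qed
    ultimately show "merge (V - Y) g h \<in> {p \<in> forests V R. restrict p (V - Y) = g}" unfolding p_def by simp
  qed
qed

lemma Hset_UN: "Hset = (\<Union>e\<in>forests Y R. PiE (Y - R) (\<lambda>y. {v\<in>V. rho g Y v = e y}))"
proof
  show "Hset \<subseteq> (\<Union>e\<in>forests Y R. PiE (Y - R) (\<lambda>y. {v\<in>V. rho g Y v = e y}))"
  proof
    fix h assume h: "h \<in> Hset"
    then have hP: "h \<in> PiE (Y - R) (\<lambda>_. V)" and eF: "restrict (rho g Y \<circ> h) (Y - R) \<in> forests Y R"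
      unfolding Hset_def by auto
    have "h \<in> PiE (Y - R) (\<lambda>y. {v\<in>V. rho g Y v = restrict (rho g Y \<circ> h) (Y - R) y})"
      using hP by (auto simp: PiE_iff)
    then show "h \<in> (\<Union>e\<in>forests Y R. PiE (Y - R) (\<lambda>y. {v\<in>V. rho g Y v = e y}))" using eF by blast
  qed
  show "(\<Union>e\<in>forests Y R. PiE (Y - R) (\<lambda>y. {v\<in>V. rho g Y v = e y})) \<subseteq> Hset"
  proof
    fix h assume "h \<in> (\<Union>e\<in>forests Y R. PiE (Y - R) (\<lambda>y. {v\<in>V. rho g Y v = e y}))"
    then obtain e where eF: "e \<in> forests Y R" and h: "h \<in> PiE (Y - R) (\<lambda>y. {v\<in>V. rho g Y v = e y})" by blast
    have hP: "h \<in> PiE (Y - R) (\<lambda>_. V)" using h by (auto simp: PiE_iff)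
    have "restrict (rho g Y \<circ> h) (Y - R) = e"
    proof
      fix y show "restrict (rho g Y \<circ> h) (Y - R) y = e y"
        using h forests_out[OF eF, of y] by (cases "y \<in> Y - R") (auto simp: PiE_iff)
    qed
    then show "h \<in> Hset" unfolding Hset_def using hP eF by simp
  qed
qed

lemma card_Hset: "card Hset = (\<Sum>e\<in>forests Y R. \<Prod>y\<in>Y - R. card {v\<in>V. rho g Y v = e y})"
proof -
  have finY: "finite Y" using finV YV finite_subset by auto
  have "card Hset = (\<Sum>e\<in>forests Y R. card (PiE (Y - R) (\<lambda>y. {v\<in>V. rho g Y v = e y})))"
    unfolding Hset_UN
  proof (rule card_UN_disjoint)
    show "finite (forests Y R)" using finite_forests[OF finY] .
    show "\<forall>e\<in>forests Y R. finite (PiE (Y - R) (\<lambda>y. {v\<in>V. rho g Y v = e y}))"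
      using finY finV by (auto intro: finite_PiE)
    show "\<forall>e1\<in>forests Y R. \<forall>e2\<in>forests Y R. e1 \<noteq> e2 \<longrightarrow>
      PiE (Y - R) (\<lambda>y. {v\<in>V. rho g Y v = e1 y}) \<inter> PiE (Y - R) (\<lambda>y. {v\<in>V. rho g Y v = e2 y}) = {}"
    proof (intro ballI impI)
      fix e1 e2 assume e1: "e1 \<in> forests Y R" and e2: "e2 \<in> forests Y R" and ne: "e1 \<noteq> e2"
      show "PiE (Y - R) (\<lambda>y. {v\<in>V. rho g Y v = e1 y}) \<inter> PiE (Y - R) (\<lambda>y. {v\<in>V. rho g Y v = e2 y}) = {}"
      proof (rule ccontr)
        assume "PiE (Y - R) (\<lambda>y. {v\<in>V. rho g Y v = e1 y}) \<inter> PiE (Y - R) (\<lambda>y. {v\<in>V. rho g Y v = e2 y}) \<noteq> {}"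
        then obtain h where h1: "h \<in> PiE (Y - R) (\<lambda>y. {v\<in>V. rho g Y v = e1 y})"
          and h2: "h \<in> PiE (Y - R) (\<lambda>y. {v\<in>V. rho g Y v = e2 y})" by blast
        have "e1 = e2"
        proof
          fix y show "e1 y = e2 y"
          proof (cases "y \<in> Y - R")
            case True then show ?thesis using h1 h2 by (auto simp: PiE_iff)
          next
            case False then show ?thesis using forests_out[OF e1] forests_out[OF e2] by simp
          qed
        qed
        then show False using ne by simp
      qed
    qed
  qed
  also have "\<dots> = (\<Sum>e\<in>forests Y R. \<Prod>y\<in>Y - R. card {v\<in>V. rho g Y v = e y})"
    using finY by (simp add: card_PiE)
  finally show ?thesis .
qed

lemma card_fibers: "card V = (\<Sum>y\<in>Y. card {v\<in>V. rho g Y v = y})"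
proof -
  have finY: "finite Y" using finV YV finite_subset by auto
  have "V = (\<Union>y\<in>Y. {v\<in>V. rho g Y v = y})" using rho_in by auto
  then have "card V = card (\<Union>y\<in>Y. {v\<in>V. rho g Y v = y})" by simp
  also have "\<dots> = (\<Sum>y\<in>Y. card {v\<in>V. rho g Y v = y})"
    using finY finV by (intro card_UN_disjoint) auto
  finally show ?thesis .
qed

lemma comp_count:
  assumes Yne: "Y \<noteq> {}"
  shows "real (card {p \<in> forests V R. restrict p (V - Y) = g})
    = (\<Sum>y\<in>R. real (card {v\<in>V. rho g Y v = y})) * real (card V) ^ card (Y - R) / real (card V)"
proof -
  have finY: "finite Y" using finV YV finite_subset by auto
  define x where "x = (\<lambda>y. real (card {v\<in>V. rho g Y v = y}))"
  have "card {p \<in> forests V R. restrict p (V - Y) = g} = card Hset"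
    using comp_bij by (rule bij_betw_same_card)
  then have "real (card {p \<in> forests V R. restrict p (V - Y) = g}) = W x Y R"
    unfolding card_Hset W_def x_def by simp
  also have "\<dots> = sum x R * sum x Y ^ card (Y - R) / sum x Y"
  proof (rule W_formula[OF finY Yne RY])
    show "\<forall>v\<in>Y. 0 < x v"
    proof
      fix y assume y: "y \<in> Y"
      then have "y \<in> {v\<in>V. rho g Y v = y}" using rho_Y YV by auto
      then have "card {v\<in>V. rho g Y v = y} > 0" using finV by (auto simp: card_gt_0_iff)
      then show "0 < x y" unfolding x_def by simp
    qed
  qed
  also have "sum x Y = real (card V)" unfolding x_def card_fibers by simp
  finally show ?thesis unfolding x_def .
qed

end


definition ok :: "'a set \<Rightarrow> 'a set \<Rightarrow> ('a \<Rightarrow> 'a) \<Rightarrow> bool" where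
  "ok A B p \<longleftrightarrow> (\<forall>v\<in>A. p v \<notin> B) \<and> (\<forall>v\<in>B. p v \<notin> A)"

context
  fixes A B C :: "'a set"
  assumes finA: "finite A" and finB: "finite B" and finC: "finite C"
    and dAB: "A \<inter> B = {}" and dAC: "A \<inter> C = {}" and dBC: "B \<inter> C = {}"
begin

lemma G_card:
  "card {g \<in> forests (A \<union> B \<union> C) C. ok A B g} = card (forests (A \<union> C) C) * card (forests (B \<union> C) C)"
proof -
  define V where "V = A \<union> B \<union> C"
  define mg where "mg = (\<lambda>(g1, g2). (\<lambda>v. if v \<in> A then g1 v else g2 v) :: 'a \<Rightarrow> 'a)"
  have "bij_betw (\<lambda>g. (restrict g A, restrict g B)) {g \<in> forests V C. ok A B g}
          (forests (A \<union> C) C \<times> forests (B \<union> C) C)"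
  proof (rule bij_betw_byWitness[where f' = mg])
    show "\<forall>g\<in>{g \<in> forests V C. ok A B g}. mg (restrict g A, restrict g B) = g"
    proof (intro ballI ext)
      fix g v assume g: "g \<in> {g \<in> forests V C. ok A B g}"
      then have gF: "g \<in> forests V C" by simp
      show "mg (restrict g A, restrict g B) v = g v"
      proof (cases "v \<in> A \<or> v \<in> B")
        case True then show ?thesis unfolding mg_def using dAB by auto
      next
        case False
        then have "v \<notin> V - C" unfolding V_def by auto
        then have "g v = undefined" using forests_out[OF gF] by simp
        then show ?thesis unfolding mg_def using False by simp
      qed
    qed
    show "\<forall>gg\<in>forests (A \<union> C) C \<times> forests (B \<union> C) C. (restrict (mg gg) A, restrict (mg gg) B) = gg"
    proof (intro ballI)
      fix gg assume gg: "gg \<in> forests (A \<union> C) C \<times> forests (B \<union> C) C"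
      then obtain g1 g2 where gg': "gg = (g1, g2)" and g1: "g1 \<in> forests (A \<union> C) C"
        and g2: "g2 \<in> forests (B \<union> C) C" by auto
      have "restrict (mg gg) A = g1"
      proof
        fix v show "restrict (mg gg) A v = g1 v"
          using forests_out[OF g1, of v] dAC unfolding gg' mg_def by auto
      qed
      moreover have "restrict (mg gg) B = g2"
      proof
        fix v show "restrict (mg gg) B v = g2 v"
          using forests_out[OF g2, of v] dAB dBC unfolding gg' mg_def by auto
      qed
      ultimately show "(restrict (mg gg) A, restrict (mg gg) B) = gg" unfolding gg' by simp
    qed
    show "(\<lambda>g. (restrict g A, restrict g B)) ` {g \<in> forests V C. ok A B g} \<subseteq> forests (A \<union> C) C \<times> forests (B \<union> C) C"
    proof (rule image_subsetI)
      fix g assume "g \<in> {g \<in> forests V C. ok A B g}"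
      then have gF: "g \<in> forests V C" and gok: "ok A B g" by auto
      have gA: "g v \<in> A \<union> C" if "v \<in> A" for v
        using forestsD[OF gF, of v] gok that dAC unfolding ok_def V_def by auto
      have gB: "g v \<in> B \<union> C" if "v \<in> B" for v
        using forestsD[OF gF, of v] gok that dBC unfolding ok_def V_def by auto
      have r1: "restrict g A \<in> forests (A \<union> C) C"
        unfolding forests_def mem_Collect_eq
      proof (intro conjI ballI)
        show "restrict g A \<in> PiE (A \<union> C - C) (\<lambda>_. A \<union> C)"
          using gA dAC by (auto simp: PiE_iff)
        fix v assume v: "v \<in> A \<union> C"
        then obtain i where "(g ^^ i) v \<in> C" using forests_reach[OF gF, of v] unfolding reach_def V_def by auto
        then show "reach (restrict g A) C v"
          by (rule reach_agree[where Z = "A \<union> C"]) (use v gA in auto)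
      qed
      have r2: "restrict g B \<in> forests (B \<union> C) C"
        unfolding forests_def mem_Collect_eq
      proof (intro conjI ballI)
        show "restrict g B \<in> PiE (B \<union> C - C) (\<lambda>_. B \<union> C)"
          using gB dBC by (auto simp: PiE_iff)
        fix v assume v: "v \<in> B \<union> C"
        then obtain i where "(g ^^ i) v \<in> C" using forests_reach[OF gF, of v] unfolding reach_def V_def by auto
        then show "reach (restrict g B) C v"
          by (rule reach_agree[where Z = "B \<union> C"]) (use v gB in auto)
      qed
      show "(restrict g A, restrict g B) \<in> forests (A \<union> C) C \<times> forests (B \<union> C) C" using r1 r2 by simp
    qed
    show "mg ` (forests (A \<union> C) C \<times> forests (B \<union> C) C) \<subseteq> {g \<in> forests V C. ok A B g}"
    proof (rule image_subsetI)
      fix gg assume gg: "gg \<in> forests (A \<union> C) C \<times> forests (B \<union> C) C"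
      then obtain g1 g2 where gg': "gg = (g1, g2)" and g1: "g1 \<in> forests (A \<union> C) C"
        and g2: "g2 \<in> forests (B \<union> C) C" by auto
      define g where "g = mg gg"
      have gv1: "g v = g1 v" if "v \<in> A" for v using that unfolding g_def gg' mg_def by simp
      have gv2: "g v = g2 v" if "v \<notin> A" for v using that unfolding g_def gg' mg_def by simp
      have g1A: "g1 v \<in> A \<union> C" if "v \<in> A" for v using forestsD[OF g1, of v] that dAC by auto
      have g2B: "g2 v \<in> B \<union> C" if "v \<in> B" for v using forestsD[OF g2, of v] that dBC by auto
      have gP: "g \<in> PiE (V - C) (\<lambda>_. V)"
        unfolding PiE_iff extensional_def mem_Collect_eq
      proof (intro conjI ballI allI impI)
        fix v assume v: "v \<in> V - C"
        show "g v \<in> V"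
        proof (cases "v \<in> A")
          case True then show ?thesis using gv1 g1A unfolding V_def by auto
        next
          case False then have "v \<in> B" using v unfolding V_def by auto
          then show ?thesis using gv2 g2B False unfolding V_def by auto
        qed
      next
        fix v assume v: "v \<notin> V - C"
        then have "v \<notin> A" "v \<notin> B - C" using dAC unfolding V_def by auto
        then show "g v = undefined" using gv2 forests_out[OF g2, of v] by auto
      qed
      have "\<forall>v\<in>V. reach g C v"
      proof
        fix v assume v: "v \<in> V"
        show "reach g C v"
        proof (cases "v \<in> A \<union> C")
          case True
          then obtain i where "(g1 ^^ i) v \<in> C" using forests_reach[OF g1] unfolding reach_def by blast
          then show ?thesis
            by (rule reach_agree[where Z = "A \<union> C"]) (use True gv1 g1A in auto)
        next
          case False
          then have vB: "v \<in> B \<union> C" using v unfolding V_def by auto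
          then obtain i where "(g2 ^^ i) v \<in> C" using forests_reach[OF g2] unfolding reach_def by blast
          then show ?thesis
          proof (rule reach_agree[where Z = "B \<union> C"])
            show "v \<in> B \<union> C" using vB .
            fix w assume "w \<in> B \<union> C" "w \<notin> C"
            then have "w \<in> B" "w \<notin> A" using dAB by auto
            then show "g2 w = g w \<and> g2 w \<in> B \<union> C" using gv2 g2B by auto
          qed
        qed
      qed
      then have "g \<in> forests V C" unfolding forests_def using gP by simp
      moreover have "ok A B g" unfolding ok_def
      proof (intro conjI ballI)
        fix v assume "v \<in> A" then show "g v \<notin> B" using gv1 g1A dAB dBC by fastforce
      next
        fix v assume v: "v \<in> B"
        then have "v \<notin> A" using dAB by auto
        then show "g v \<notin> A" using gv2 g2B v dAB dAC by fastforce
      qed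
      ultimately show "mg gg \<in> {g \<in> forests V C. ok A B g}" unfolding g_def by simp
    qed
  qed
  then have "card {g \<in> forests V C. ok A B g} = card (forests (A \<union> C) C \<times> forests (B \<union> C) C)"
    by (rule bij_betw_same_card)
  then show ?thesis unfolding V_def card_cartesian_product .
qed

lemma S_count:
  assumes c0: "c0 \<in> C"
  shows "real (card {p \<in> forests (A \<union> B \<union> C) {c0}. ok A B p}) =
    (\<Sum>g\<in>{g \<in> forests (A \<union> B \<union> C) C. ok A B g}. real (card {v\<in>A \<union> B \<union> C. rho g C v = c0}))
      * real (card (A \<union> B \<union> C)) ^ (card C - 1) / real (card (A \<union> B \<union> C))"
proof -
  define V where "V = A \<union> B \<union> C"
  define G where "G = {g \<in> forests V C. ok A B g}"
  define P where "P = (\<lambda>g. {p \<in> forests V {c0}. restrict p (V - C) = g})"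
  have finV: "finite V" unfolding V_def using finA finB finC by simp
  have CV: "C \<subseteq> V" unfolding V_def by auto
  have S_eq: "{p \<in> forests V {c0}. ok A B p} = (\<Union>g\<in>G. P g)"
  proof
    show "{p \<in> forests V {c0}. ok A B p} \<subseteq> (\<Union>g\<in>G. P g)"
    proof
      fix p assume "p \<in> {p \<in> forests V {c0}. ok A B p}"
      then have pF: "p \<in> forests V {c0}" and pok: "ok A B p" by auto
      define g where "g = restrict p (V - C)"
      have pV: "p w \<in> V" if "w \<in> V - C" for w using forestsD[OF pF, of w] that c0 by auto
      have gP: "g \<in> PiE (V - C) (\<lambda>_. V)" unfolding g_def using pV by auto
      have "\<forall>v\<in>V. reach g C v"
      proof
        fix v assume v: "v \<in> V"
        obtain i where "(p ^^ i) v \<in> {c0}" using forests_reach[OF pF v] unfolding reach_def by auto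
        then have "(p ^^ i) v \<in> C" using c0 by simp
        then show "reach g C v"
          by (rule reach_agree[where Z = V]) (use v pV in \<open>auto simp: g_def\<close>)
      qed
      then have "g \<in> forests V C" unfolding forests_def using gP by simp
      moreover have "ok A B g" using pok dAC dBC unfolding ok_def g_def V_def by auto
      ultimately have "g \<in> G" unfolding G_def by simp
      moreover have "p \<in> P g" unfolding P_def g_def using pF by simp
      ultimately show "p \<in> (\<Union>g\<in>G. P g)" by blast
    qed
    show "(\<Union>g\<in>G. P g) \<subseteq> {p \<in> forests V {c0}. ok A B p}"
    proof
      fix p assume "p \<in> (\<Union>g\<in>G. P g)"
      then obtain g where g: "g \<in> G" and p: "p \<in> P g" by blast
      then have pF: "p \<in> forests V {c0}" and pr: "restrict p (V - C) = g" unfolding P_def by auto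
      have "ok A B g" using g unfolding G_def by simp
      moreover have "\<And>v. v \<in> A \<union> B \<Longrightarrow> p v = g v" using pr dAC dBC unfolding V_def by auto
      ultimately have "ok A B p" unfolding ok_def by auto
      then show "p \<in> {p \<in> forests V {c0}. ok A B p}" using pF by simp
    qed
  qed
  have finG: "finite G" unfolding G_def using finite_forests[OF finV] by simp
  have "card {p \<in> forests V {c0}. ok A B p} = (\<Sum>g\<in>G. card (P g))"
    unfolding S_eq
  proof (rule card_UN_disjoint[OF finG])
    show "\<forall>g\<in>G. finite (P g)" unfolding P_def using finite_forests[OF finV] by simp
    show "\<forall>g1\<in>G. \<forall>g2\<in>G. g1 \<noteq> g2 \<longrightarrow> P g1 \<inter> P g2 = {}" unfolding P_def by auto
  qed
  then have "real (card {p \<in> forests V {c0}. ok A B p}) = (\<Sum>g\<in>G. real (card (P g)))" by simp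
  also have "\<dots> = (\<Sum>g\<in>G. real (card {v\<in>V. rho g C v = c0}) * real (card V) ^ (card C - 1) / real (card V))"
  proof (rule sum.cong[OF refl])
    fix g assume "g \<in> G"
    then have gF: "g \<in> forests V C" unfolding G_def by simp
    have c0C: "{c0} \<subseteq> C" using c0 by simp
    have Cne: "C \<noteq> {}" using c0 by auto
    from comp_count[OF finV CV c0C gF Cne] c0
    show "real (card (P g)) = real (card {v\<in>V. rho g C v = c0}) * real (card V) ^ (card C - 1) / real (card V)"
      unfolding P_def using finC by (simp add: card_Diff_singleton)
  qed
  also have "\<dots> = (\<Sum>g\<in>G. real (card {v\<in>V. rho g C v = c0})) * real (card V) ^ (card C - 1) / real (card V)"
    by (simp add: sum_distrib_right sum_divide_distrib)
  finally show ?thesis unfolding V_def G_def .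
qed

lemma S_sum:
  assumes Cne: "C \<noteq> {}"
  shows "(\<Sum>c0\<in>C. real (card {p \<in> forests (A \<union> B \<union> C) {c0}. ok A B p})) =
    real (card {g \<in> forests (A \<union> B \<union> C) C. ok A B g}) * real (card (A \<union> B \<union> C)) ^ (card C - 1)"
proof -
  define V where "V = A \<union> B \<union> C"
  define G where "G = {g \<in> forests V C. ok A B g}"
  define N where "N = real (card V)"
  have finV: "finite V" unfolding V_def using finA finB finC by simp
  have CV: "C \<subseteq> V" unfolding V_def by auto
  have Npos: "N > 0" unfolding N_def using finV CV Cne by (auto simp: card_gt_0_iff)
  have "(\<Sum>c0\<in>C. real (card {p \<in> forests V {c0}. ok A B p}))
      = (\<Sum>c0\<in>C. (\<Sum>g\<in>G. real (card {v\<in>V. rho g C v = c0})) * N ^ (card C - 1) / N)"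
    using S_count unfolding V_def G_def N_def by simp
  also have "\<dots> = (\<Sum>g\<in>G. \<Sum>c0\<in>C. real (card {v\<in>V. rho g C v = c0})) * N ^ (card C - 1) / N"
    by (simp add: sum_distrib_right sum_divide_distrib sum.swap[of _ C G])
  also have "(\<Sum>g\<in>G. \<Sum>c0\<in>C. real (card {v\<in>V. rho g C v = c0})) = (\<Sum>g\<in>G. N)"
  proof (rule sum.cong[OF refl])
    fix g assume "g \<in> G"
    then have gF: "g \<in> forests V C" unfolding G_def by simp
    have "card V = (\<Sum>y\<in>C. card {v\<in>V. rho g C v = y})" using card_fibers[OF finV CV order.refl gF] .
    then show "(\<Sum>c0\<in>C. real (card {v\<in>V. rho g C v = c0})) = N" unfolding N_def by (simp flip: of_nat_sum)
  qed
  also have "(\<Sum>g\<in>G. N) * N ^ (card C - 1) / N = real (card G) * N ^ (card C - 1)"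
    using Npos by simp
  finally show ?thesis unfolding V_def G_def N_def .
qed

end


lemma trees_eq: "spanning_trees_K n = {T. is_tree {1..n} T}"
  unfolding spanning_trees_K_def complete_edges_def is_tree_def by auto

lemma W_one: "W (\<lambda>_. 1) V R = real (card (forests V R))"
  unfolding W_def by simp

lemma card_trees_Q:
  assumes finV: "finite V" and c0: "c0 \<in> V"
  shows "card {T. is_tree V T \<and> Q T} = card {p \<in> forests V {c0}. Q (pedges (V - {c0}) p)}"
proof -
  define f where "f = pedges (V - {c0})"
  define S where "S = {p \<in> forests V {c0}. Q (f p)}"
  have bij: "bij_betw f (forests V {c0}) {T. is_tree V T}" unfolding f_def using tree_bij[OF finV c0] .
  have inj0: "inj_on f (forests V {c0})" using bij by (simp add: bij_betw_def)
  have img: "f ` forests V {c0} = {T. is_tree V T}" using bij by (simp add: bij_betw_def)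
  have inj: "inj_on f S" using inj0 unfolding S_def by (rule inj_on_subset) auto
  have "f ` S = {T. is_tree V T \<and> Q T}"
  proof
    show "f ` S \<subseteq> {T. is_tree V T \<and> Q T}"
    proof (rule image_subsetI)
      fix p assume p: "p \<in> S"
      then have "f p \<in> f ` forests V {c0}" unfolding S_def by simp
      then show "f p \<in> {T. is_tree V T \<and> Q T}" using img p unfolding S_def by simp
    qed
    show "{T. is_tree V T \<and> Q T} \<subseteq> f ` S"
    proof
      fix T assume T: "T \<in> {T. is_tree V T \<and> Q T}"
      then have "T \<in> f ` forests V {c0}" using img by simp
      then obtain p where p: "p \<in> forests V {c0}" "T = f p" by blast
      then have "p \<in> S" unfolding S_def using T by simp
      then show "T \<in> f ` S" using p by blast
    qed
  qed
  then have "card {T. is_tree V T \<and> Q T} = card S" using card_image[OF inj] by simp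
  then show ?thesis unfolding S_def f_def .
qed

lemma pedges_forb:
  assumes pF: "p \<in> forests V {c0}" and AV: "A \<subseteq> V" and BV: "B \<subseteq> V" and c0: "c0 \<notin> A \<union> B"
  shows "pedges (V - {c0}) p \<inter> {{i, j} | i j. i \<in> A \<and> j \<in> B} = {} \<longleftrightarrow> ok A B p"
proof
  assume e: "pedges (V - {c0}) p \<inter> {{i, j} | i j. i \<in> A \<and> j \<in> B} = {}"
  show "ok A B p" unfolding ok_def
  proof (intro conjI ballI notI)
    fix v assume v: "v \<in> A" "p v \<in> B"
    then have "{v, p v} \<in> pedges (V - {c0}) p" unfolding pedges_def using AV c0 by auto
    moreover have "{v, p v} \<in> {{i, j} | i j. i \<in> A \<and> j \<in> B}" using v by auto
    ultimately show False using e by blast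
  next
    fix v assume v: "v \<in> B" "p v \<in> A"
    then have "{v, p v} \<in> pedges (V - {c0}) p" unfolding pedges_def using BV c0 by auto
    moreover have "{v, p v} \<in> {{i, j} | i j. i \<in> A \<and> j \<in> B}" using v by (auto simp: insert_commute)
    ultimately show False using e by blast
  qed
next
  assume ok: "ok A B p"
  show "pedges (V - {c0}) p \<inter> {{i, j} | i j. i \<in> A \<and> j \<in> B} = {}"
  proof (rule ccontr)
    assume "pedges (V - {c0}) p \<inter> {{i, j} | i j. i \<in> A \<and> j \<in> B} \<noteq> {}"
    then obtain v i j where v: "v \<in> V - {c0}" and eq: "{v, p v} = {i, j}" and ij: "i \<in> A" "j \<in> B"
      unfolding pedges_def by blast
    then have "(v = i \<and> p v = j) \<or> (v = j \<and> p v = i)" by (auto simp: doubleton_eq_iff)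
    then show False using ok ij unfolding ok_def by auto
  qed
qed


theorem lemma2p8:
  fixes n k l :: nat
  assumes "k \<ge> 1" and "l \<ge> 1" and "k + l \<le> n"
  shows "measure_pmf.prob (pmf_of_set (spanning_trees_K n))
           {T. T \<inter> {{i, j} | i j. 1 \<le> i \<and> i \<le> k \<and> n - l < j \<and> j \<le> n} = {}}
         = (real (n - k) ^ (l - 1) * real (n - l) ^ (k - 1) * real (n - k - l))
           / real n ^ (k + l - 1)"
proof -
  define V where "V = {1..n}"
  define A where "A = {1..k}"
  define B where "B = {n - l<..n}"
  define C where "C = {k<..n - l}"
  define Forb where "Forb = {{i, j} | i j. 1 \<le> i \<and> i \<le> k \<and> n - l < j \<and> j \<le> n}"
  define S where "S = spanning_trees_K n"
  define m where "m = n - k - l"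
  have Forb_eq: "Forb = {{i, j} | i j. i \<in> A \<and> j \<in> B}" unfolding Forb_def A_def B_def by (simp add: conj_assoc)
  have finA: "finite A" and finB: "finite B" and finC: "finite C" and finV: "finite V"
    unfolding A_def B_def C_def V_def by auto
  have dAB: "A \<inter> B = {}" and dAC: "A \<inter> C = {}" and dBC: "B \<inter> C = {}"
    unfolding A_def B_def C_def using assms by auto
  have V_eq: "V = A \<union> B \<union> C" unfolding V_def A_def B_def C_def using assms by auto
  have n2: "n \<ge> 2" using assms by simp
  have S_eq: "S = {T. is_tree V T}" unfolding S_def V_def by (rule trees_eq)
  have cardV: "card V = n" unfolding V_def by simp
  have oneV: "1 \<in> V" unfolding V_def using n2 by simp
  have "card S = card {T. is_tree V T \<and> True}" unfolding S_eq by simp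
  also have "\<dots> = card (forests V {1})" using card_trees_Q[OF finV oneV, of "\<lambda>_. True"] by simp
  finally have "real (card S) = W (\<lambda>_. 1) V {1}" by (simp add: W_one)
  also have "\<dots> = real n ^ (n - 1) / real n"
  proof -
    have "V \<noteq> {}" "{1} \<subseteq> V" "\<forall>v\<in>V. (0::real) < (\<lambda>_. 1) v" using oneV by auto
    from W_formula[OF finV this]
    show ?thesis using cardV oneV finV by (simp add: card_Diff_singleton)
  qed
  finally have cardS: "real (card S) = real n ^ (n - 1) / real n" .
  have Spos: "card S > 0"
  proof -
    have "real n ^ (n - 1) / real n > 0" using n2 by simp
    then show ?thesis using cardS by simp
  qed
  then have finS: "finite S" and neS: "S \<noteq> {}" using card_gt_0_iff by blast+
  have SE: "S \<inter> {T. T \<inter> Forb = {}} = {T. is_tree V T \<and> T \<inter> Forb = {}}" unfolding S_eq by auto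
  have prob: "measure_pmf.prob (pmf_of_set S) {T. T \<inter> Forb = {}}
      = real (card {T. is_tree V T \<and> T \<inter> Forb = {}}) / real (card S)"
    using measure_pmf_of_set[OF neS finS] SE by simp
  show ?thesis
  proof (cases "m = 0")
    case True
    have empty: "{T. is_tree V T \<and> T \<inter> Forb = {}} = {}"
    proof (rule ccontr)
      assume "{T. is_tree V T \<and> T \<inter> Forb = {}} \<noteq> {}"
      then obtain T where T: "is_tree V T" "T \<inter> Forb = {}" by blast
      have VAB: "V = A \<union> B" using True unfolding V_def A_def B_def m_def using assms by auto
      have nV: "n \<in> V" and oV: "1 \<in> V" unfolding V_def using n2 by auto
      have conn: "(1, n) \<in> (adj_rel T)\<^sup>*" using T(1) nV oV unfolding is_tree_def graph_connected_def by blast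
      have "y \<in> A" if "(1, y) \<in> (adj_rel T)\<^sup>*" for y
        using that
      proof (induction rule: rtrancl_induct)
        case base then show ?case unfolding A_def using assms by simp
      next
        case (step x y)
        then have e: "{x, y} \<in> T" unfolding adj_rel_def by simp
        obtain a b where ab: "{x, y} = {a, b}" "a \<in> V" "b \<in> V" using tree_edge[OF T(1) e] by blast
        have "y \<in> {a, b}" using ab(1) by (metis insertCI)
        then have yV: "y \<in> V" using ab by blast
        show ?case
        proof (rule ccontr)
          assume "y \<notin> A"
          then have "y \<in> B" using yV VAB by simp
          then have "{x, y} \<in> Forb" unfolding Forb_eq using step.IH by blast
          then show False using e T(2) by blast
        qed
      qed
      then have "n \<in> A" using conn by blast
      then show False unfolding A_def using assms by simp
    qed
    have "measure_pmf.prob (pmf_of_set S) {T. T \<inter> Forb = {}} = 0" using prob empty by simp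
    moreover have "real (n - k - l) = 0" using True unfolding m_def by simp
    ultimately show ?thesis unfolding S_def Forb_def by simp
  next
    case False
    then have Cne: "C \<noteq> {}" unfolding C_def m_def using assms by auto
    define t where "t = real (card {T. is_tree V T \<and> T \<inter> Forb = {}})"
    have cardC: "card C = m" unfolding C_def m_def by simp
    have tc: "real (card {p \<in> forests (A \<union> B \<union> C) {c0}. ok A B p}) = t" if c0: "c0 \<in> C" for c0
    proof -
      have c0V: "c0 \<in> V" using c0 V_eq by auto
      have "card {T. is_tree V T \<and> T \<inter> Forb = {}} = card {p \<in> forests V {c0}. pedges (V - {c0}) p \<inter> Forb = {}}"
        using card_trees_Q[OF finV c0V, of "\<lambda>T. T \<inter> Forb = {}"] .
      also have "{p \<in> forests V {c0}. pedges (V - {c0}) p \<inter> Forb = {}} = {p \<in> forests V {c0}. ok A B p}"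
      proof -
        have "c0 \<notin> A \<union> B" using c0 dAC dBC by auto
        moreover have "A \<subseteq> V" "B \<subseteq> V" using V_eq by auto
        ultimately have eqv: "\<And>p. p \<in> forests V {c0} \<Longrightarrow> (pedges (V - {c0}) p \<inter> Forb = {}) = ok A B p"
          unfolding Forb_eq by (intro pedges_forb) auto
        show ?thesis by (rule Collect_cong) (use eqv in blast)
      qed
      finally show ?thesis unfolding t_def V_eq by simp
    qed
    have "(\<Sum>c0\<in>C. real (card {p \<in> forests (A \<union> B \<union> C) {c0}. ok A B p})) = real m * t"
      using tc cardC by simp
    moreover have "(\<Sum>c0\<in>C. real (card {p \<in> forests (A \<union> B \<union> C) {c0}. ok A B p})) =
      real (card (forests (A \<union> C) C)) * real (card (forests (B \<union> C) C)) * real n ^ (m - 1)"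
      using S_sum[OF finA finB finC dAB dAC dBC Cne] G_card[OF finA finB finC dAB dAC dBC] V_eq cardV cardC
      by simp
    ultimately have mt: "real m * t = real (card (forests (A \<union> C) C)) * real (card (forests (B \<union> C) C)) * real n ^ (m - 1)"
      by simp
    have AC: "A \<union> C = {1..n - l}" "A \<union> C - C = A" unfolding A_def C_def using assms by auto
    have BC: "B \<union> C = {k<..n}" "B \<union> C - C = B" unfolding B_def C_def using assms by auto
    have FA: "real (card (forests (A \<union> C) C)) = real m * real (n - l) ^ k / real (n - l)"
    proof -
      have "real (card (forests (A \<union> C) C)) = W (\<lambda>_. 1) (A \<union> C) C" by (simp add: W_one)
      also have "\<dots> = real (card C) * real (card (A \<union> C)) ^ card (A \<union> C - C) / real (card (A \<union> C))"
        using W_formula[OF _ _ _, of "A \<union> C" C "\<lambda>_. 1"] finA finC Cne by simp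
      finally show ?thesis using AC cardC unfolding A_def by simp
    qed
    have FB: "real (card (forests (B \<union> C) C)) = real m * real (n - k) ^ l / real (n - k)"
    proof -
      have "real (card (forests (B \<union> C) C)) = W (\<lambda>_. 1) (B \<union> C) C" by (simp add: W_one)
      also have "\<dots> = real (card C) * real (card (B \<union> C)) ^ card (B \<union> C - C) / real (card (B \<union> C))"
        using W_formula[OF _ _ _, of "B \<union> C" C "\<lambda>_. 1"] finB finC Cne by simp
      finally show ?thesis using BC cardC assms unfolding B_def by simp
    qed
    obtain k' where k': "k = Suc k'" using assms(1) by (cases k) auto
    obtain l' where l': "l = Suc l'" using assms(2) by (cases l) auto
    obtain m' where m': "m = Suc m'" using False by (cases m) auto
    have nn: "n = k' + l' + m' + 3" using m' k' l' assms unfolding m_def by simp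
    define N where "N = real n"
    define a where "a = real (n - l)"
    define b where "b = real (n - k)"
    have Npos: "N > 0" unfolding N_def using n2 by simp
    have apos: "a > 0" unfolding a_def using nn l' by simp
    have bpos: "b > 0" unfolding b_def using nn k' by simp
    have mpos: "real m > 0" using False by simp
    have FA': "real (card (forests (A \<union> C) C)) = real m * a ^ k'"
    proof -
      have "real (card (forests (A \<union> C) C)) = real m * (a * a ^ k') / a"
        using FA unfolding a_def[symmetric] k' by simp
      then show ?thesis using apos by simp
    qed
    have FB': "real (card (forests (B \<union> C) C)) = real m * b ^ l'"
    proof -
      have "real (card (forests (B \<union> C) C)) = real m * (b * b ^ l') / b"
        using FB unfolding b_def[symmetric] l' by simp
      then show ?thesis using bpos by simp
    qed
    have mt': "real m * t = (real m * a ^ k') * (real m * b ^ l') * N ^ m'"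
      using mt unfolding FA' FB' N_def[symmetric] m' by simp
    have "real m * t = real m * (real m * a ^ k' * b ^ l' * N ^ m')"
      using mt' by (simp add: algebra_simps)
    then have tv: "t = real m * a ^ k' * b ^ l' * N ^ m'" using mpos by simp
    have cS: "real (card S) = N ^ (k' + l' + 1) * N ^ m'"
    proof -
      have e: "n - 1 = Suc (k' + l' + 1 + m')" using nn by simp
      have "real (card S) = N * N ^ (k' + l' + 1 + m') / N" using cardS unfolding N_def[symmetric] e by simp
      also have "\<dots> = N ^ (k' + l' + 1 + m')" using Npos by simp
      finally show ?thesis by (simp add: power_add)
    qed
    have "measure_pmf.prob (pmf_of_set S) {T. T \<inter> Forb = {}} = t / real (card S)"
      using prob unfolding t_def .
    also have "\<dots> = b ^ l' * a ^ k' * real m / N ^ (k' + l' + 1)"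
      unfolding tv cS using Npos by (simp add: field_simps)
    also have "\<dots> = (real (n - k) ^ (l - 1) * real (n - l) ^ (k - 1) * real (n - k - l)) / real n ^ (k + l - 1)"
      unfolding a_def b_def N_def m_def k' l' by simp
    finally show ?thesis unfolding S_def Forb_def .
  qed
qed


end
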